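(* Assume that each $f_m^j$ is $L$-smooth. In the setting described in the context, for every meta-epoch $t$, $$\Big\|\frac1R\sum_{r=0}^{R-1}\frac1C\sum_{m\in S_t^{\lambda_r}}\frac1N\sum_{j=0}^{N-1}\nabla f_m^{\pi_m^j}(x^{r,j}_{m,t})\Big\|^2\le 2L^2V_t+4L\big(f(x_t)-f(x_\star)\big),$$ where $V_t=\frac{1}{RCN}\sum_{r=0}^{R-1}\sum_{m\in S_t^{\lambda_r}}\sum_{j=0}^{N-1}\|x_t-x^{r,j}_{m,t}\|^2$.
   Context: Setting. There are $M$ clients, each holding $N$ data points. For $m\in[M]$ and $j\in\{0,\dots,N-1\}$, $f_m^j:\mathbb{R}^d\to\mathbb{R}$ is differentiable. Define $f_m=\frac1N\sum_j f_m^j$ and $f=\frac1M\sum_m f_m$, and let $x_\star$ be a minimizer of $f$. $L$-smooth means the gradient is $L$-Lipschitz. Algorithm RR-CLI. Let $C$ be a cohort size with $M=CR$, and let $\gamma,\eta,\theta>0$. In meta-epoch $t$: - The clients are partitioned into $R$ disjoint cohorts of size $C$, taken in order $S_t^{\lambda_0},\dots,S_t^{\lambda_{R-1}}$. - Each client $m$ has a permutation $\pi_m=(\pi_m^0,\dots,\pi_m^{N-1})$ of its data indices. - Set $x_t^0=x_t$. For $r=0,\dots,R-1$ and $m\in S_t^{\lambda_r}$, set $x^{r,0}_{m,t}=x^r_t$ and $x^{r,j+1}_{m,t}=x^{r,j}_{m,t}-\gamma\nabla f_m^{\pi_m^j}(x^{r,j}_{m,t})$ for $j=0,\dots,N-1$.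 - The server sets $x^{r+1}_t=x^r_t-\eta\frac1C\sum_{m\in S_t^{\lambda_r}}\frac{x^r_t-x^{r,N}_{m,t}}{\gamma N}$. - Finally, $x_{t+1}=x_t-\theta\frac{x_t-x^R_t}{\eta R}$. *)

theory Defs
  imports "HOL-Analysis.Analysis"
begin

definition fbar :: "(nat \<Rightarrow> nat \<Rightarrow> 'a \<Rightarrow> real) \<Rightarrow> nat \<Rightarrow> nat \<Rightarrow> 'a \<Rightarrow> real" where
  "fbar f M N x = (1 / real M) * (\<Sum>m<M. (1 / real N) * (\<Sum>j<N. f m j x))"

text \<open>Local iterates of client m started at y with permutation p:
  loc g gamma p m y j = x^{r,j}_{m,t} when y = x^r_t.  g m j is the gradient of f_m^j.\<close>
primrec loc :: "(nat \<Rightarrow> nat \<Rightarrow> 'a::real_vector \<Rightarrow> 'a) \<Rightarrow> real \<Rightarrow> (nat \<Rightarrow> nat) \<Rightarrow> nat \<Rightarrow> 'a \<Rightarrow> nat \<Rightarrow> 'a" where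
  "loc g \<gamma> p m y 0 = y"
| "loc g \<gamma> p m y (Suc j) = loc g \<gamma> p m y j - \<gamma> *\<^sub>R g m (p j) (loc g \<gamma> p m y j)"

text \<open>Server iterates within one meta-epoch: srv ... S p y r = x^r_t when y = x_t,
  S r is the r-th cohort (in the order taken), p m the permutation of client m.\<close>
primrec srv :: "(nat \<Rightarrow> nat \<Rightarrow> 'a::real_vector \<Rightarrow> 'a) \<Rightarrow> real \<Rightarrow> real \<Rightarrow> nat \<Rightarrow> nat
    \<Rightarrow> (nat \<Rightarrow> nat set) \<Rightarrow> (nat \<Rightarrow> nat \<Rightarrow> nat) \<Rightarrow> 'a \<Rightarrow> nat \<Rightarrow> 'a" where
  "srv g \<gamma> \<eta> N C S p y 0 = y"
| "srv g \<gamma> \<eta> N C S p y (Suc r) =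
     srv g \<gamma> \<eta> N C S p y r - \<eta> *\<^sub>R ((1 / real C) *\<^sub>R
       (\<Sum>m\<in>S r. (1 / (\<gamma> * real N)) *\<^sub>R
          (srv g \<gamma> \<eta> N C S p y r - loc g \<gamma> (p m) m (srv g \<gamma> \<eta> N C S p y r) N)))"

text \<open>Outer iterates x_t of RR-CLI: S t r is the r-th cohort in meta-epoch t,
  p t m the permutation of client m used in meta-epoch t.\<close>
primrec meta :: "(nat \<Rightarrow> nat \<Rightarrow> 'a::real_vector \<Rightarrow> 'a) \<Rightarrow> real \<Rightarrow> real \<Rightarrow> real \<Rightarrow> nat \<Rightarrow> nat \<Rightarrow> nat
    \<Rightarrow> (nat \<Rightarrow> nat \<Rightarrow> nat set) \<Rightarrow> (nat \<Rightarrow> nat \<Rightarrow> nat \<Rightarrow> nat) \<Rightarrow> 'a \<Rightarrow> nat \<Rightarrow> 'a" where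
  "meta g \<gamma> \<eta> \<theta> N C R S p x0 0 = x0"
| "meta g \<gamma> \<eta> \<theta> N C R S p x0 (Suc t) =
     meta g \<gamma> \<eta> \<theta> N C R S p x0 t - (\<theta> / (\<eta> * real R)) *\<^sub>R
       (meta g \<gamma> \<eta> \<theta> N C R S p x0 t
          - srv g \<gamma> \<eta> N C (S t) (p t) (meta g \<gamma> \<eta> \<theta> N C R S p x0 t) R)"

end

theory Submission imports Defs begin
lemma avg_sq:
  fixes v :: "'b \<Rightarrow> 'a::real_normed_vector"
  assumes "finite A" "card A = n" "n > 0"
  shows "(norm ((1 / real n) *\<^sub>R (\<Sum>i\<in>A. v i)))\<^sup>2 \<le> (1 / real n) * (\<Sum>i\<in>A. (norm (v i))\<^sup>2)"
proof -
  have "norm (\<Sum>i\<in>A. v i) \<le> (\<Sum>i\<in>A. norm (v i))" by (rule norm_sum)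
  hence "(norm (\<Sum>i\<in>A. v i))\<^sup>2 \<le> (\<Sum>i\<in>A. norm (v i))\<^sup>2"
    by (simp add: power_mono)
  also have "\<dots> \<le> (\<Sum>i\<in>A. (norm (v i))\<^sup>2) * real n"
    using sum_squared_le_sum_of_squares[of "\<lambda>i. norm (v i)" A] assms by simp
  finally have *: "(norm (\<Sum>i\<in>A. v i))\<^sup>2 \<le> (\<Sum>i\<in>A. (norm (v i))\<^sup>2) * real n" .
  have "(norm ((1 / real n) *\<^sub>R (\<Sum>i\<in>A. v i)))\<^sup>2 = (norm (\<Sum>i\<in>A. v i))\<^sup>2 / (real n)\<^sup>2"
    using assms by (simp add: power_divide)
  also have "\<dots> \<le> (\<Sum>i\<in>A. (norm (v i))\<^sup>2) * real n / (real n)\<^sup>2"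
    using * by (simp add: divide_right_mono)
  also have "\<dots> = (1 / real n) * (\<Sum>i\<in>A. (norm (v i))\<^sup>2)"
    using assms by (simp add: power2_eq_square)
  finally show ?thesis .
qed

lemma descent:
  fixes h :: "'a::real_inner \<Rightarrow> real" and gr :: "'a \<Rightarrow> 'a"
  assumes d: "\<And>x. (h has_derivative (\<lambda>v. gr x \<bullet> v)) (at x)"
    and lip: "\<And>x y. norm (gr x - gr y) \<le> L * norm (x - y)"
  shows "h y \<le> h x + gr x \<bullet> (y - x) + L / 2 * (norm (y - x))\<^sup>2"
proof -
  define u where "u = y - x"
  define \<phi> where "\<phi> s = h (x + s *\<^sub>R u) - s * (gr x \<bullet> u) - L / 2 * s\<^sup>2 * (norm u)\<^sup>2" for s :: real
  have D: "DERIV \<phi> s :> (gr (x + s *\<^sub>R u) \<bullet> u - gr x \<bullet> u - L * s * (norm u)\<^sup>2)" for s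
  proof -
    have l: "((\<lambda>s::real. x + s *\<^sub>R u) has_derivative (\<lambda>d. d *\<^sub>R u)) (at s)"
      by (auto intro!: derivative_eq_intros)
    have hd: "((\<lambda>s. h (x + s *\<^sub>R u)) has_derivative (\<lambda>d. gr (x + s *\<^sub>R u) \<bullet> (d *\<^sub>R u))) (at s)"
      using has_derivative_compose[OF l d] by simp
    hence "((\<lambda>s. h (x + s *\<^sub>R u)) has_real_derivative (gr (x + s *\<^sub>R u) \<bullet> u)) (at s)" (is ?thesis2)
    proof -
      have "(\<lambda>d. gr (x + s *\<^sub>R u) \<bullet> (d *\<^sub>R u)) = (*) (gr (x + s *\<^sub>R u) \<bullet> u)"
        by (auto simp: fun_eq_iff)
      then show ?thesis2 using hd unfolding has_field_derivative_def by simp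
    qed
    then show ?thesis unfolding \<phi>_def
      by (auto intro!: derivative_eq_intros)
  qed
  have "\<phi> 1 \<le> \<phi> 0"
  proof (rule DERIV_nonpos_imp_nonincreasing[of 0 1 \<phi>])
    fix s :: real assume s: "0 \<le> s" "s \<le> 1"
    have "gr (x + s *\<^sub>R u) \<bullet> u - gr x \<bullet> u = (gr (x + s *\<^sub>R u) - gr x) \<bullet> u"
      by (simp add: inner_diff_left)
    also have "\<dots> \<le> norm (gr (x + s *\<^sub>R u) - gr x) * norm u" by (rule norm_cauchy_schwarz)
    also have "\<dots> \<le> L * norm (s *\<^sub>R u) * norm u"
      using lip[of "x + s *\<^sub>R u" x] by (simp add: mult_right_mono)
    also have "\<dots> = L * s * (norm u)\<^sup>2" using s by (simp add: power2_eq_square)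
    finally show "\<exists>y. DERIV \<phi> s :> y \<and> y \<le> 0" using D[of s] by auto
  qed simp
  thus ?thesis unfolding \<phi>_def u_def by simp
qed

theorem lemma7:
  fixes f :: "nat \<Rightarrow> nat \<Rightarrow> 'a::euclidean_space \<Rightarrow> real"
    and g :: "nat \<Rightarrow> nat \<Rightarrow> 'a \<Rightarrow> 'a"
    and L \<gamma> \<eta> \<theta> :: real and M N C R :: nat
    and S :: "nat \<Rightarrow> nat \<Rightarrow> nat set" and p :: "nat \<Rightarrow> nat \<Rightarrow> nat \<Rightarrow> nat"
    and x0 xstar :: 'a and t :: nat
  assumes "N > 0" and "C > 0" and "R > 0" and "M = C * R"
    and "\<gamma> > 0" and "\<eta> > 0" and "\<theta> > 0"
    and grad: "\<And>m j x. m < M \<Longrightarrow> j < N \<Longrightarrow> (f m j has_derivative (\<lambda>h. g m j x \<bullet> h)) (at x)"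
    and smooth: "\<And>m j x y. m < M \<Longrightarrow> j < N \<Longrightarrow> norm (g m j x - g m j y) \<le> L * norm (x - y)"
    and min: "\<And>y. fbar f M N xstar \<le> fbar f M N y"
    and cohorts: "\<And>t r. r < R \<Longrightarrow> S t r \<subseteq> {..<M} \<and> card (S t r) = C"
    and disj: "\<And>t r r'. r < R \<Longrightarrow> r' < R \<Longrightarrow> r \<noteq> r' \<Longrightarrow> S t r \<inter> S t r' = {}"
    and cover: "\<And>t. (\<Union>r<R. S t r) = {..<M}"
    and perm: "\<And>t m. m < M \<Longrightarrow> bij_betw (p t m) {..<N} {..<N}"
  shows
    "let xt = meta g \<gamma> \<eta> \<theta> N C R S p x0 t;
         z = (\<lambda>r. srv g \<gamma> \<eta> N C (S t) (p t) xt r);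
         V = (1 / (real R * real C * real N)) *
             (\<Sum>r<R. \<Sum>m\<in>S t r. \<Sum>j<N. (norm (xt - loc g \<gamma> (p t m) m (z r) j))\<^sup>2)
     in (norm ((1 / real R) *\<^sub>R (\<Sum>r<R. (1 / real C) *\<^sub>R (\<Sum>m\<in>S t r.
            (1 / real N) *\<^sub>R (\<Sum>j<N. g m (p t m j) (loc g \<gamma> (p t m) m (z r) j))))))\<^sup>2
        \<le> 2 * L\<^sup>2 * V + 4 * L * (fbar f M N xt - fbar f M N xstar)"
proof -
  define xt where "xt = meta g \<gamma> \<eta> \<theta> N C R S p x0 t"
  define y where "y r m j = loc g \<gamma> (p t m) m (srv g \<gamma> \<eta> N C (S t) (p t) xt r) j" for r m j
  define F where "F = fbar f M N"
  define G where "G x = (1 / real M) *\<^sub>R (\<Sum>m<M. (1 / real N) *\<^sub>R (\<Sum>j<N. g m j x))" for x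
  have Mpos: "M > 0" using assms(2,3,4) by simp
  have L0: "L \<ge> 0"
  proof -
    obtain b :: 'a where b: "b \<in> Basis" using nonempty_Basis by blast
    have "0 \<le> norm (g 0 0 b - g 0 0 0)" by simp
    also have "\<dots> \<le> L * norm (b - 0)" using smooth[of 0 0 b 0] Mpos assms(1) by simp
    finally show ?thesis using b by (simp add: zero_le_mult_iff)
  qed
  have Fdesc: "F v \<le> F x + G x \<bullet> (v - x) + L / 2 * (norm (v - x))\<^sup>2" for x v
  proof -
    let ?c = "L / 2 * (norm (v - x))\<^sup>2"
    have e: "f m j v \<le> f m j x + g m j x \<bullet> (v - x) + ?c" if "m < M" "j < N" for m j
      by (rule descent[where gr = "g m j"]) (use grad smooth that in auto)
    have "F v = (1 / real M) * (\<Sum>m<M. (1 / real N) * (\<Sum>j<N. f m j v))"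
      unfolding F_def fbar_def by simp
    also have "\<dots> \<le> (1 / real M) * (\<Sum>m<M. (1 / real N) * (\<Sum>j<N. f m j x + g m j x \<bullet> (v - x) + ?c))"
      by (intro mult_left_mono sum_mono) (use e in auto)
    also have "\<dots> = F x + G x \<bullet> (v - x) + ?c"
      unfolding F_def fbar_def G_def using Mpos assms(1)
      by (simp add: sum.distrib inner_sum_left sum_distrib_left distrib_left)
    finally show ?thesis .
  qed
  have Gb: "(norm (G xt))\<^sup>2 \<le> 2 * L * (F xt - F xstar)"
  proof -
    have key: "F xstar \<le> F xt - s * (norm (G xt))\<^sup>2 + L / 2 * s\<^sup>2 * (norm (G xt))\<^sup>2" for s
    proof -
      have "F xstar \<le> F (xt - s *\<^sub>R G xt)" unfolding F_def by (rule min)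
      also have "\<dots> \<le> F xt + G xt \<bullet> (- (s *\<^sub>R G xt)) + L / 2 * (norm (- (s *\<^sub>R G xt)))\<^sup>2"
        using Fdesc[of "xt - s *\<^sub>R G xt" xt] by simp
      also have "\<dots> = F xt - s * (norm (G xt))\<^sup>2 + L / 2 * s\<^sup>2 * (norm (G xt))\<^sup>2"
        by (simp add: power2_norm_eq_inner power_mult_distrib)
      finally show ?thesis .
    qed
    show ?thesis
    proof (cases "L = 0")
      case True
      show ?thesis
      proof (rule ccontr)
        assume "\<not> ?thesis"
        hence pos: "(norm (G xt))\<^sup>2 > 0" using True by simp
        define s where "s = (F xt - F xstar + 1) / (norm (G xt))\<^sup>2"
        have "F xstar \<le> F xt - s * (norm (G xt))\<^sup>2" using key[of s] True by simp
        also have "s * (norm (G xt))\<^sup>2 = F xt - F xstar + 1" unfolding s_def using pos by simp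
        finally show False by simp
      qed
    next
      case False
      hence Lp: "L > 0" using L0 by simp
      have "F xstar \<le> F xt - (1 / L) * (norm (G xt))\<^sup>2 + L / 2 * (1 / L)\<^sup>2 * (norm (G xt))\<^sup>2"
        by (rule key)
      also have "\<dots> = F xt - (norm (G xt))\<^sup>2 / (2 * L)"
        using Lp by (simp add: field_simps power2_eq_square)
      finally have "(norm (G xt))\<^sup>2 / (2 * L) \<le> F xt - F xstar" by simp
      thus ?thesis using Lp by (simp add: field_simps)
    qed
  qed
  have Sfin: "finite (S t r)" "S t r \<subseteq> {..<M}" "card (S t r) = C" if "r < R" for r
    using cohorts[OF that, of t] by (auto intro: finite_subset)
  have pN: "p t m j < N" if "m < M" "j < N" for m j
    using perm[OF that(1), of t] that(2) by (auto dest: bij_betw_imp_surj_on)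
  define W where "W = (1 / real R) *\<^sub>R (\<Sum>r<R. (1 / real C) *\<^sub>R (\<Sum>m\<in>S t r.
            (1 / real N) *\<^sub>R (\<Sum>j<N. g m (p t m j) (y r m j))))"
  define Wa where "Wa = (1 / real R) *\<^sub>R (\<Sum>r<R. (1 / real C) *\<^sub>R (\<Sum>m\<in>S t r.
            (1 / real N) *\<^sub>R (\<Sum>j<N. g m (p t m j) (y r m j) - g m (p t m j) xt)))"
  define Wb where "Wb = (1 / real R) *\<^sub>R (\<Sum>r<R. (1 / real C) *\<^sub>R (\<Sum>m\<in>S t r.
            (1 / real N) *\<^sub>R (\<Sum>j<N. g m (p t m j) xt)))"
  have WW: "W = Wa + Wb"
    unfolding W_def Wa_def Wb_def
    by (simp add: sum_subtractf scaleR_diff_right sum.distrib flip: scaleR_right_distrib)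
  have WbG: "Wb = G xt"
  proof -
    have r1: "(\<Sum>j<N. g m (p t m j) xt) = (\<Sum>j<N. g m j xt)" if "m < M" for m
      using sum.reindex_bij_betw[OF perm[OF that, of t], of "\<lambda>j. g m j xt"] by simp
    define w where "w m = (1 / real N) *\<^sub>R (\<Sum>j<N. g m j xt)" for m
    have "Wb = (1 / real R) *\<^sub>R (\<Sum>r<R. (1 / real C) *\<^sub>R (\<Sum>m\<in>S t r. w m))"
    proof -
      have eqr: "(\<Sum>m\<in>S t r. (1 / real N) *\<^sub>R (\<Sum>j<N. g m (p t m j) xt)) = (\<Sum>m\<in>S t r. w m)"
        if "r < R" for r
        unfolding w_def using r1 Sfin(2)[OF that] by (intro sum.cong refl) auto
      show ?thesis unfolding Wb_def
        by (rule arg_cong[where f = "scaleR _"], rule sum.cong[OF refl], simp add: eqr)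
    qed
    also have "\<dots> = (1 / real R) *\<^sub>R (1 / real C) *\<^sub>R (\<Sum>r<R. \<Sum>m\<in>S t r. w m)"
      by (simp add: scaleR_sum_right)
    also have "(\<Sum>r<R. \<Sum>m\<in>S t r. w m) = (\<Sum>m\<in>(\<Union>r<R. S t r). w m)"
      by (rule sum.UNION_disjoint[symmetric]) (use Sfin disj in auto)
    also have "\<dots> = (\<Sum>m<M. w m)" using cover by simp
    also have "(1 / real R) *\<^sub>R (1 / real C) *\<^sub>R (\<Sum>m<M. w m) = G xt"
      unfolding G_def w_def using assms(4) by simp
    finally show ?thesis .
  qed
  define V where "V = (1 / (real R * real C * real N)) *
             (\<Sum>r<R. \<Sum>m\<in>S t r. \<Sum>j<N. (norm (xt - y r m j))\<^sup>2)"
  have Wab: "(norm Wa)\<^sup>2 \<le> L\<^sup>2 * V"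
  proof -
    have "(norm Wa)\<^sup>2 \<le> (1 / real R) * (\<Sum>r<R. (norm ((1 / real C) *\<^sub>R (\<Sum>m\<in>S t r.
            (1 / real N) *\<^sub>R (\<Sum>j<N. g m (p t m j) (y r m j) - g m (p t m j) xt))))\<^sup>2)"
      unfolding Wa_def by (rule avg_sq) (use assms in auto)
    also have "\<dots> \<le> (1 / real R) * (\<Sum>r<R. (1 / real C) * (\<Sum>m\<in>S t r.
            (1 / real N) * (\<Sum>j<N. (L * norm (xt - y r m j))\<^sup>2)))"
    proof (intro mult_left_mono sum_mono)
      fix r assume r: "r \<in> {..<R}"
      have "(norm ((1 / real C) *\<^sub>R (\<Sum>m\<in>S t r.
            (1 / real N) *\<^sub>R (\<Sum>j<N. g m (p t m j) (y r m j) - g m (p t m j) xt))))\<^sup>2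
         \<le> (1 / real C) * (\<Sum>m\<in>S t r. (norm ((1 / real N) *\<^sub>R (\<Sum>j<N. g m (p t m j) (y r m j) - g m (p t m j) xt)))\<^sup>2)"
        by (rule avg_sq) (use Sfin r assms in auto)
      also have "\<dots> \<le> (1 / real C) * (\<Sum>m\<in>S t r.
            (1 / real N) * (\<Sum>j<N. (L * norm (xt - y r m j))\<^sup>2))"
      proof (intro mult_left_mono sum_mono)
        fix m assume m: "m \<in> S t r"
        have mM: "m < M" using Sfin r m by auto
        have "(norm ((1 / real N) *\<^sub>R (\<Sum>j<N. g m (p t m j) (y r m j) - g m (p t m j) xt)))\<^sup>2
           \<le> (1 / real N) * (\<Sum>j<N. (norm (g m (p t m j) (y r m j) - g m (p t m j) xt))\<^sup>2)"
          by (rule avg_sq) (use assms in auto)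
        also have "\<dots> \<le> (1 / real N) * (\<Sum>j<N. (L * norm (xt - y r m j))\<^sup>2)"
        proof (intro mult_left_mono sum_mono)
          fix j assume j: "j \<in> {..<N}"
          have "norm (g m (p t m j) (y r m j) - g m (p t m j) xt) \<le> L * norm (y r m j - xt)"
            using smooth[OF mM pN[OF mM]] j by auto
          also have "\<dots> = L * norm (xt - y r m j)" by (simp add: norm_minus_commute)
          finally show "(norm (g m (p t m j) (y r m j) - g m (p t m j) xt))\<^sup>2 \<le> (L * norm (xt - y r m j))\<^sup>2"
            by (simp add: power_mono)
        qed simp
        finally show "(norm ((1 / real N) *\<^sub>R (\<Sum>j<N. g m (p t m j) (y r m j) - g m (p t m j) xt)))\<^sup>2
           \<le> (1 / real N) * (\<Sum>j<N. (L * norm (xt - y r m j))\<^sup>2)" .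
      qed simp
      finally show "(norm ((1 / real C) *\<^sub>R (\<Sum>m\<in>S t r.
            (1 / real N) *\<^sub>R (\<Sum>j<N. g m (p t m j) (y r m j) - g m (p t m j) xt))))\<^sup>2
         \<le> (1 / real C) * (\<Sum>m\<in>S t r. (1 / real N) * (\<Sum>j<N. (L * norm (xt - y r m j))\<^sup>2))" .
    qed simp
    also have "\<dots> = L\<^sup>2 * V"
      unfolding V_def power_mult_distrib sum_distrib_left
      by (intro sum.cong refl) (simp add: field_simps)
    finally show ?thesis .
  qed
  have "(norm W)\<^sup>2 \<le> 2 * (norm Wa)\<^sup>2 + 2 * (norm Wb)\<^sup>2"
  proof -
    have "norm W \<le> norm Wa + norm Wb" unfolding WW by (rule norm_triangle_ineq)
    hence "(norm W)\<^sup>2 \<le> (norm Wa + norm Wb)\<^sup>2" by (simp add: power_mono)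
    also have "\<dots> \<le> 2 * (norm Wa)\<^sup>2 + 2 * (norm Wb)\<^sup>2"
    proof -
      have "0 \<le> (norm Wa - norm Wb)\<^sup>2" by simp
      thus ?thesis unfolding power2_diff power2_sum by linarith
    qed
    finally show ?thesis .
  qed
  also have "\<dots> \<le> 2 * L\<^sup>2 * V + 4 * L * (F xt - F xstar)"
    using Wab Gb WbG by simp
  finally have fin: "(norm W)\<^sup>2 \<le> 2 * L\<^sup>2 * V + 4 * L * (F xt - F xstar)" .
  show ?thesis
    unfolding Let_def using fin unfolding W_def V_def y_def xt_def F_def .
qed

end
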